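(* Let $d\ge1$ and $1<p_1<p<p_2<\infty$. Then there exists a Young function $\Phi$ with $L^\Phi(\mathbb R^d)=L^p(\mathbb R^d)$, $q_\Phi=p_1$ and $p_\Phi=p_2$.
   Context: A Young function is a convex function $\Phi:[0,\infty)\to[0,\infty)$ with $\Phi(0)=0$, $\Phi(t)>0$ for $t>0$, and $\lim_{t\to\infty}\Phi(t)=\infty$. $\Phi'$ denotes the right derivative of $\Phi$. The Lebesgue exponents of $\Phi$ are $p_\Phi=\sup_{t>0}\frac{t\Phi'(t)}{\Phi(t)}$ and $q_\Phi=\inf_{t>0}\frac{t\Phi'(t)}{\Phi(t)}$. For a measurable $f$ on $\mathbb R^d$, $\rho_\Phi(f)=\int_{\mathbb R^d}\Phi(|f(x)|)\,dx$, the Luxemburg norm is $\|f\|_{L^\Phi}=\inf\{\lambda>0:\rho_\Phi(f/\lambda)\le1\}$, and the Orlicz space $L^\Phi(\mathbb R^d)$ consists of (classes of) measurable $f$ with $\|f\|_{L^\Phi}<\infty$. *)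

theory Defs
  imports "HOL-Analysis.Analysis"
begin

definition young_function :: "(real \<Rightarrow> real) \<Rightarrow> bool" where
  "young_function \<Phi> \<longleftrightarrow>
     convex_on {0..} \<Phi> \<and> \<Phi> 0 = 0 \<and> (\<forall>t>0. \<Phi> t > 0) \<and> filterlim \<Phi> at_top at_top"

definition right_deriv :: "(real \<Rightarrow> real) \<Rightarrow> real \<Rightarrow> real" where
  "right_deriv \<Phi> t = Lim (at_right t) (\<lambda>s. (\<Phi> s - \<Phi> t) / (s - t))"

text \<open>Lebesgue exponents (as extended reals, so that sup/inf are always meaningful).\<close>
definition upper_exponent :: "(real \<Rightarrow> real) \<Rightarrow> ereal" where
  "upper_exponent \<Phi> = (SUP t\<in>{0<..}. ereal (t * right_deriv \<Phi> t / \<Phi> t))"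

definition lower_exponent :: "(real \<Rightarrow> real) \<Rightarrow> ereal" where
  "lower_exponent \<Phi> = (INF t\<in>{0<..}. ereal (t * right_deriv \<Phi> t / \<Phi> t))"

definition orlicz_modular :: "(real \<Rightarrow> real) \<Rightarrow> ('a::euclidean_space \<Rightarrow> real) \<Rightarrow> ennreal" where
  "orlicz_modular \<Phi> f = (\<integral>\<^sup>+ x. ennreal (\<Phi> \<bar>f x\<bar>) \<partial>lebesgue)"

definition luxemburg_norm :: "(real \<Rightarrow> real) \<Rightarrow> ('a::euclidean_space \<Rightarrow> real) \<Rightarrow> ennreal" where
  "luxemburg_norm \<Phi> f =
     (INF c\<in>{c::real. c > 0 \<and> orlicz_modular \<Phi> (\<lambda>x. f x / c) \<le> 1}. ennreal c)"

definition orlicz_space :: "(real \<Rightarrow> real) \<Rightarrow> ('a::euclidean_space \<Rightarrow> real) set" where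
  "orlicz_space \<Phi> = {f \<in> borel_measurable lebesgue. luxemburg_norm \<Phi> f < \<infinity>}"

definition Lp_space :: "real \<Rightarrow> ('a::euclidean_space \<Rightarrow> real) set" where
  "Lp_space p = {f \<in> borel_measurable lebesgue. (\<integral>\<^sup>+ x. ennreal (\<bar>f x\<bar> powr p) \<partial>lebesgue) < \<infinity>}"

end

theory Submission
  imports Defs
begin

definition k0 :: "real \<Rightarrow> real" where "k0 x = x * exp ((1 - x^2)/2)"
definition K0 :: "real \<Rightarrow> real" where "K0 x = exp (1/2) - exp ((1 - x^2)/2)"
definition dk0 :: "real \<Rightarrow> real" where "dk0 x = (1 - x^2) * exp ((1 - x^2)/2)"

lemma K0_deriv: "(K0 has_real_derivative k0 x) (at x)"
  unfolding K0_def k0_def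
  by (auto intro!: derivative_eq_intros simp: algebra_simps)

lemma k0_deriv: "(k0 has_real_derivative dk0 x) (at x)"
  unfolding dk0_def k0_def
  by (auto intro!: derivative_eq_intros simp: algebra_simps power2_eq_square)

lemma k0_0[simp]: "k0 0 = 0" and K0_0[simp]: "K0 0 = 0"
  by (auto simp: k0_def K0_def)

lemma k0_1: "k0 1 = 1" by (simp add: k0_def)
lemma k0_neg: "k0 (-x) = - k0 x" by (simp add: k0_def)
lemma k0_nonneg: "x \<ge> 0 \<Longrightarrow> k0 x \<ge> 0" by (simp add: k0_def)

lemma k0_le1: "x \<ge> 0 \<Longrightarrow> k0 x \<le> 1"
proof -
  assume x: "x \<ge> 0"
  have "1 + (x^2 - 1)/2 \<le> exp ((x^2 - 1)/2)" by (rule exp_ge_add_one_self)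
  moreover have "x \<le> 1 + (x^2 - 1)/2" using sum_squares_ge_zero[of "x - 1" 0]
    by (simp add: power2_eq_square field_simps)
  ultimately have "x \<le> exp ((x^2 - 1)/2)" by linarith
  hence "x * exp ((1 - x^2)/2) \<le> exp ((x^2 - 1)/2) * exp ((1 - x^2)/2)"
    by (simp add: mult_right_mono)
  also have "\<dots> = 1" by (simp add: exp_add[symmetric] add_divide_distrib[symmetric])
  finally show ?thesis by (simp add: k0_def)
qed

lemma k0_ge: "k0 x \<ge> -1"
proof (cases "x \<ge> 0")
  case True thus ?thesis using k0_nonneg[of x] by simp
next
  case False
  hence "k0 (-x) \<le> 1" by (intro k0_le1) simp
  thus ?thesis by (simp add: k0_neg)
qed

lemma k0_le: "k0 x \<le> 1"
proof (cases "x \<ge> 0")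
  case True thus ?thesis by (rule k0_le1)
next
  case False
  hence "k0 (-x) \<ge> 0" by (intro k0_nonneg) simp
  thus ?thesis by (simp add: k0_neg)
qed

lemma k0_nonpos: "x \<le> 0 \<Longrightarrow> k0 x \<le> 0"
  using k0_nonneg[of "-x"] by (simp add: k0_neg)

lemma K0_bounds: "0 \<le> K0 x" "K0 x \<le> 2"
proof -
  have "exp ((1 - x^2)/2) \<le> exp (1/2)" by simp
  thus "0 \<le> K0 x" by (simp add: K0_def)
  have "exp (1/2::real) \<le> 2"
  proof -
    have "exp (1/2::real) ^ 2 = exp 1" by (simp add: exp_double[symmetric] power2_eq_square exp_add[symmetric])
    also have "\<dots> \<le> 4" using exp_le by simp
    finally have "exp (1/2::real)^2 \<le> 2^2" by simp
    thus ?thesis by (rule power2_le_imp_le) simp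
  qed
  moreover have "0 \<le> exp ((1 - x^2)/2)" by simp
  ultimately show "K0 x \<le> 2" unfolding K0_def by linarith
qed

lemma dk0_ge: "dk0 x \<ge> -4"
proof -
  have e: "exp (1/2::real) \<le> 2"
  proof -
    have "exp (1/2::real) ^ 2 = exp 1" by (simp add: power2_eq_square exp_add[symmetric])
    also have "\<dots> \<le> 4" using exp_le by simp
    finally have "exp (1/2::real)^2 \<le> 2^2" by simp
    thus ?thesis by (rule power2_le_imp_le) simp
  qed
  have "x^2/2 \<le> exp (x^2/2)" using exp_ge_add_one_self[of "x^2/2"] by linarith
  hence "x^2 * exp (- (x^2/2)) \<le> 2" by (simp add: exp_minus field_simps)
  hence "x^2 * exp ((1 - x^2)/2) \<le> 4"
  proof -
    assume a: "x^2 * exp (- (x^2/2)) \<le> 2"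
    have "x^2 * exp ((1 - x^2)/2) = (x^2 * exp (- (x^2/2))) * exp (1/2)"
      by (simp add: exp_add[symmetric] diff_divide_distrib)
    also have "\<dots> \<le> 2 * 2" using a e by (intro mult_mono) auto
    finally show ?thesis by simp
  qed
  moreover have "0 \<le> exp ((1 - x^2)/2)" by simp
  moreover have "dk0 x = exp ((1 - x^2)/2) - x^2 * exp ((1 - x^2)/2)" unfolding dk0_def by (simp add: algebra_simps)
  ultimately show ?thesis by linarith
qed

definition gg :: "real \<Rightarrow> real \<Rightarrow> real \<Rightarrow> real \<Rightarrow> real" where
  "gg u v L s = (if 0 \<le> s then u else v) * (L * K0 (s / L))"
definition hh :: "real \<Rightarrow> real \<Rightarrow> real \<Rightarrow> real \<Rightarrow> real" where
  "hh u v L s = (if 0 \<le> s then u else v) * k0 (s / L)"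

lemma piece_deriv:
  assumes "L > 0"
  shows "((\<lambda>s. c * (L * K0 (s / L))) has_real_derivative c * k0 (s / L)) (at s within S)"
proof -
  have "((\<lambda>s. s / L) has_real_derivative 1 / L) (at s within S)"
    using assms by (auto intro!: derivative_eq_intros)
  hence "((\<lambda>s. K0 (s / L)) has_real_derivative k0 (s/L) * (1/L)) (at s within S)"
    by (rule DERIV_chain2[OF K0_deriv])
  hence "((\<lambda>s. c * (L * K0 (s / L))) has_real_derivative c * (L * (k0 (s/L) * (1/L)))) (at s within S)"
    by (intro DERIV_cmult)
  thus ?thesis using assms by simp
qed

lemma gg_deriv:
  assumes L: "L > 0"
  shows "(gg u v L has_real_derivative hh u v L s) (at s)"
proof -
  let ?fu = "\<lambda>s. u * (L * K0 (s / L))" and ?fv = "\<lambda>s. v * (L * K0 (s / L))"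
  have "((\<lambda>s. if s \<in> {0..} then ?fu s else ?fv s) has_derivative
      (if s \<in> {0..} then ((*) (u * k0 (s/L))) else ((*) (v * k0 (s/L))))) (at s within ({0..} \<union> {..<0}))"
  proof (rule has_derivative_If_within_closures)
    show "((\<lambda>s. u * (L * K0 (s / L))) has_derivative ((*) (u * k0 (s/L))))
        (at s within {0..} \<union> (closure {0..} \<inter> closure {..<0}))"
      using piece_deriv[OF L, of u s] by (simp add: has_field_derivative_def)
    show "((\<lambda>s. v * (L * K0 (s / L))) has_derivative ((*) (v * k0 (s/L))))
        (at s within {..<0} \<union> (closure {0..} \<inter> closure {..<0}))"
      using piece_deriv[OF L, of v s] by (simp add: has_field_derivative_def)
    show "s \<in> closure {0..} \<Longrightarrow> s \<in> closure {..<0} \<Longrightarrow> ?fu s = ?fv s" by auto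
    show "s \<in> closure {0..} \<Longrightarrow> s \<in> closure {..<0} \<Longrightarrow> ((*) (u * k0 (s/L))) = ((*) (v * k0 (s/L)))" by auto
    show "s \<in> {0..} \<union> {..<0::real}" by auto
  qed
  moreover have "{0..} \<union> {..<0::real} = UNIV" by auto
  moreover have "(\<lambda>s. if s \<in> {0..} then ?fu s else ?fv s) = gg u v L" by (auto simp: gg_def fun_eq_iff)
  moreover have "(if s \<in> {0..} then ((*) (u * k0 (s/L))) else ((*) (v * k0 (s/L)))) = (*) (hh u v L s)"
    by (auto simp: hh_def)
  ultimately show ?thesis by (simp add: has_field_derivative_def)
qed


definition Phi :: "real \<Rightarrow> real \<Rightarrow> real \<Rightarrow> real \<Rightarrow> real \<Rightarrow> real" where
  "Phi p u v L t = (if t \<le> 0 then 0 else exp (p * ln t + gg u v L (ln t)))"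
definition dPhi :: "real \<Rightarrow> real \<Rightarrow> real \<Rightarrow> real \<Rightarrow> real \<Rightarrow> real" where
  "dPhi p u v L t = exp (p * ln t + gg u v L (ln t)) * (p + hh u v L (ln t)) / t"

lemma Phi_deriv:
  assumes L: "L > 0" and t: "t > 0"
  shows "(Phi p u v L has_real_derivative dPhi p u v L t) (at t)"
proof -
  have lnd: "(ln has_real_derivative 1 / t) (at t)" using t by (auto intro!: derivative_eq_intros)
  have gd: "((\<lambda>z. gg u v L (ln z)) has_real_derivative hh u v L (ln t) * (1/t)) (at t)"
    by (rule DERIV_chain2[OF gg_deriv[OF L] lnd])
  have "((\<lambda>t. exp (p * ln t + gg u v L (ln t))) has_real_derivative
      exp (p * ln t + gg u v L (ln t)) * (p * (1 / t) + hh u v L (ln t) * (1 / t))) (at t)"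
  proof -
    have "((\<lambda>t. p * ln t + gg u v L (ln t)) has_real_derivative p * (1/t) + hh u v L (ln t) * (1/t)) (at t)"
      by (intro DERIV_add DERIV_cmult lnd gd)
    from DERIV_chain2[OF DERIV_exp this] show ?thesis by simp
  qed
  moreover have "exp (p * ln t + gg u v L (ln t)) * (p * (1 / t) + hh u v L (ln t) * (1 / t)) = dPhi p u v L t"
    unfolding dPhi_def using t by (simp add: field_simps)
  ultimately have "((\<lambda>t. exp (p * ln t + gg u v L (ln t))) has_real_derivative dPhi p u v L t) (at t)"
    by simp
  thus ?thesis
    by (rule has_field_derivative_transform_within_open[where S="{0<..}"]) (use t in \<open>auto simp: Phi_def\<close>)
qed

lemma right_deriv_eq:
  assumes "(f has_real_derivative D) (at t)"
  shows "right_deriv f t = D"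
proof -
  have "((\<lambda>y. (f y - f t) / (y - t)) \<longlongrightarrow> D) (at t)"
    using assms by (simp add: has_field_derivative_iff)
  hence "((\<lambda>y. (f y - f t) / (y - t)) \<longlongrightarrow> D) (at_right t)"
    by (rule tendsto_mono[rotated]) (simp add: at_le)
  thus ?thesis unfolding right_deriv_def by (intro tendsto_Lim) auto
qed

lemma gg_bounds:
  assumes "L > 0" "u \<ge> 0" "v \<ge> 0"
  shows "0 \<le> gg u v L s" "gg u v L s \<le> 2 * L * (u + v)"
proof -
  have "0 \<le> K0 (s/L)" "K0 (s/L) \<le> 2" by (rule K0_bounds)+
  thus "0 \<le> gg u v L s" using assms by (auto simp: gg_def)
  have "(if 0 \<le> s then u else v) \<le> u + v" using assms by auto
  hence "(if 0 \<le> s then u else v) * (L * K0 (s / L)) \<le> (u + v) * (L * 2)"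
    using assms \<open>0 \<le> K0 (s/L)\<close> \<open>K0 (s/L) \<le> 2\<close>
    by (intro mult_mono) auto
  thus "gg u v L s \<le> 2 * L * (u + v)" by (simp add: gg_def algebra_simps)
qed

lemma Phi_bounds:
  assumes "L > 0" "u \<ge> 0" "v \<ge> 0" "t \<ge> 0"
  shows "t powr p \<le> Phi p u v L t" "Phi p u v L t \<le> exp (2 * L * (u + v)) * t powr p"
proof -
  have "t powr p \<le> Phi p u v L t \<and> Phi p u v L t \<le> exp (2 * L * (u + v)) * t powr p"
  proof (cases "t = 0")
    case True thus ?thesis by (simp add: Phi_def)
  next
    case False
    hence t: "t > 0" using assms by auto
    have e: "Phi p u v L t = t powr p * exp (gg u v L (ln t))"
      using t by (simp add: Phi_def powr_def exp_add)
    have "0 \<le> gg u v L (ln t)" "gg u v L (ln t) \<le> 2 * L * (u + v)"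
      using gg_bounds assms by auto
    hence "1 \<le> exp (gg u v L (ln t))" "exp (gg u v L (ln t)) \<le> exp (2 * L * (u + v))"
      by auto
    thus ?thesis unfolding e using t
      by (auto simp: mult.commute intro: mult_left_mono)
  qed
  thus "t powr p \<le> Phi p u v L t" "Phi p u v L t \<le> exp (2 * L * (u + v)) * t powr p" by auto
qed


lemma convex_from_deriv:
  fixes f :: "real \<Rightarrow> real"
  assumes cont: "continuous_on {0..} f"
    and der: "\<And>x. x > 0 \<Longrightarrow> (f has_real_derivative f' x) (at x)"
    and mono: "\<And>x y. 0 < x \<Longrightarrow> x \<le> y \<Longrightarrow> f' x \<le> f' y"
  shows "convex_on {0..} f"
proof (rule convex_on_linorderI)
  show "convex {0::real..}" by (rule convex_real_interval)
next
  fix t x y :: real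
  assume t: "t > 0" "t < 1"
  assume xy: "x \<in> {0..}" "y \<in> {0..}" "x < y"
  define z where "z = (1 - t) * x + t * y"
  from xy t have xz: "z > x"
    by (simp add: z_def algebra_simps)
  have "y - z = (1 - t) * (y - x)"
    by (simp add: z_def algebra_simps)
  also from xy t have "\<dots> > 0"
    by (intro mult_pos_pos) simp_all
  finally have yz: "z < y"
    by simp
  have dif: "\<And>w. w > 0 \<Longrightarrow> f differentiable (at w)" using der real_differentiable_def by blast
  have c1: "continuous_on {x..z} f" by (rule continuous_on_subset[OF cont]) (use xy in auto)
  have c2: "continuous_on {z..y} f" by (rule continuous_on_subset[OF cont]) (use xy xz in auto)
  have "\<exists>l \<xi>. x < \<xi> \<and> \<xi> < z \<and> DERIV f \<xi> :> l \<and> f z - f x = (z - x) * l"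
    using xz c1 by (intro MVT) (use xy dif in auto)
  then obtain l \<xi> where \<xi>: "\<xi> > x" "\<xi> < z" "DERIV f \<xi> :> l" "f z - f x = (z - x) * l"
    by auto
  have l: "l = f' \<xi>" using \<xi> der[of \<xi>] xy DERIV_unique by force
  have "\<exists>l \<eta>. z < \<eta> \<and> \<eta> < y \<and> DERIV f \<eta> :> l \<and> f y - f z = (y - z) * l"
    using yz c2 by (intro MVT) (use xy xz dif in auto)
  then obtain m \<eta> where \<eta>: "\<eta> > z" "\<eta> < y" "DERIV f \<eta> :> m" "f y - f z = (y - z) * m"
    by auto
  have m: "m = f' \<eta>" using \<eta> der[of \<eta>] xy xz DERIV_unique by force
  have "f' \<xi> \<le> f' \<eta>" using \<xi> \<eta> xy by (intro mono) auto
  hence "(y - z) * (z - x) * f' \<xi> \<le> (y - z) * (z - x) * f' \<eta>"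
    using xz yz by (intro mult_left_mono) auto
  moreover have "(f y - f z) * (z - x) = (y - z) * (z - x) * f' \<eta>" by (subst \<eta>(4)) (simp add: m algebra_simps)
  moreover have "(f z - f x) * (y - z) = (y - z) * (z - x) * f' \<xi>" by (subst \<xi>(4)) (simp add: l algebra_simps)
  ultimately have "(f y - f z) * (z - x) \<ge> (f z - f x) * (y - z)" by linarith
  also have "z - x = t * (y - x)"
    by (simp add: z_def algebra_simps)
  also have "y - z = (1 - t) * (y - x)"
    by (simp add: z_def algebra_simps)
  finally have "(f y - f z) * t \<ge> (f z - f x) * (1 - t)"
    using xy by simp
  then show "(1 - t) * f x + t * f y \<ge> f ((1 - t) *\<^sub>R x + t *\<^sub>R y)"
    by (simp add: z_def algebra_simps)
qed

definition Mc :: "real \<Rightarrow> real \<Rightarrow> real \<Rightarrow> real \<Rightarrow> real" where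
  "Mc p c L s = exp ((p - 1) * s + c * (L * K0 (s / L))) * (p + c * k0 (s / L))"

lemma Mc_deriv:
  assumes L: "L > 0"
  shows "(Mc p c L has_real_derivative
     exp ((p - 1) * s + c * (L * K0 (s / L))) * (((p - 1) + c * k0 (s / L)) * (p + c * k0 (s / L)) + c * dk0 (s / L) / L)) (at s)"
proof -
  have sd: "((\<lambda>s. s / L) has_real_derivative 1 / L) (at s)"
    using L by (auto intro!: derivative_eq_intros)
  have kd: "((\<lambda>s. k0 (s / L)) has_real_derivative dk0 (s/L) * (1/L)) (at s)"
    by (rule DERIV_chain2[OF k0_deriv sd])
  have Kd: "((\<lambda>s. c * (L * K0 (s / L))) has_real_derivative c * k0 (s / L)) (at s)"
    by (rule piece_deriv[OF L])
  have ed: "((\<lambda>s. (p - 1) * s + c * (L * K0 (s / L))) has_real_derivative (p - 1) * 1 + c * k0 (s / L)) (at s)"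
    by (intro DERIV_add DERIV_cmult Kd DERIV_ident)
  have "(Mc p c L has_real_derivative
     exp ((p - 1) * s + c * (L * K0 (s / L))) * ((p - 1) * 1 + c * k0 (s / L)) * (p + c * k0 (s / L))
     + exp ((p - 1) * s + c * (L * K0 (s / L))) * (0 + c * (dk0 (s/L) * (1/L)))) (at s)"
  proof -
    have e1: "((\<lambda>s. exp ((p - 1) * s + c * (L * K0 (s / L)))) has_real_derivative
       exp ((p - 1) * s + c * (L * K0 (s / L))) * ((p - 1) * 1 + c * k0 (s / L))) (at s)"
      by (rule DERIV_chain2[OF DERIV_exp ed])
    have e2: "((\<lambda>s. p + c * k0 (s / L)) has_real_derivative 0 + c * (dk0 (s/L) * (1/L))) (at s)"
      by (intro DERIV_add DERIV_cmult DERIV_const kd)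
    show ?thesis unfolding Mc_def by (rule DERIV_cong[OF DERIV_mult[OF e1 e2]]) (simp add: algebra_simps)
  qed
  thus ?thesis by (simp add: algebra_simps)
qed

lemma Mc_mono:
  assumes L: "L > 0" and ab: "a \<le> b" and c: "c \<ge> 0" and q0: "q0 > 1"
    and reg: "\<And>s. a \<le> s \<Longrightarrow> s \<le> b \<Longrightarrow> p + c * k0 (s / L) \<ge> q0"
    and small: "4 * c \<le> L * ((q0 - 1) * q0)"
  shows "Mc p c L a \<le> Mc p c L b"
proof (rule DERIV_nonneg_imp_increasing_open[OF ab])
  fix s assume s: "a < s" "s < b"
  let ?y = "p + c * k0 (s / L)"
  have y: "?y \<ge> q0" using reg s by auto
  have "(q0 - 1) * q0 \<le> (?y - 1) * ?y" using y q0 by (intro mult_mono) auto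
  moreover have "c * dk0 (s / L) \<ge> c * (-4)" using c dk0_ge by (intro mult_left_mono) auto
  hence "c * dk0 (s / L) / L \<ge> - (4 * c) / L" using L by (intro divide_right_mono) auto
  moreover have "(4 * c) / L \<le> (q0 - 1) * q0" using small L by (simp add: field_simps)
  ultimately have "((p - 1) + c * k0 (s / L)) * (p + c * k0 (s / L)) + c * dk0 (s / L) / L \<ge> 0"
    by (simp only: diff_add_eq[symmetric])
  hence "0 \<le> exp ((p - 1) * s + c * (L * K0 (s / L))) * (((p - 1) + c * k0 (s / L)) * (p + c * k0 (s / L)) + c * dk0 (s / L) / L)"
    by simp
  thus "\<exists>y. DERIV (Mc p c L) s :> y \<and> 0 \<le> y"
    using Mc_deriv[OF L, of p c s] by blast
next
  show "continuous_on {a..b} (Mc p c L)"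
    using Mc_deriv[OF L] by (intro continuous_at_imp_continuous_on ballI DERIV_isCont) auto
qed


lemma powr_le_self: "0 \<le> t \<Longrightarrow> t \<le> 1 \<Longrightarrow> 1 \<le> (p::real) \<Longrightarrow> t powr p \<le> t"
  by (metis powr_one powr_mono')
lemma powr_ge_self: "1 \<le> t \<Longrightarrow> 1 \<le> (p::real) \<Longrightarrow> t \<le> t powr p"
  using powr_mono by force

definition MM :: "real \<Rightarrow> real \<Rightarrow> real \<Rightarrow> real \<Rightarrow> real \<Rightarrow> real" where
  "MM p u v L s = exp ((p - 1) * s + gg u v L s) * (p + hh u v L s)"

lemma MM_pos: "s \<ge> 0 \<Longrightarrow> MM p u v L s = Mc p u L s"
  by (simp add: MM_def Mc_def gg_def hh_def)
lemma MM_neg: "s \<le> 0 \<Longrightarrow> MM p u v L s = Mc p v L s"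
  by (cases "s = 0") (auto simp: MM_def Mc_def gg_def hh_def)

lemma MM_mono:
  assumes L: "L > 0" and u: "u \<ge> 0" and v: "v \<ge> 0" and q: "p - v > 1"
    and su: "4 * u \<le> L * ((p - v - 1) * (p - v))"
    and sv: "4 * v \<le> L * ((p - v - 1) * (p - v))"
    and xy: "x \<le> y"
  shows "MM p u v L x \<le> MM p u v L y"
proof -
  have A: "Mc p u L a \<le> Mc p u L b" if "0 \<le> a" "a \<le> b" for a b
  proof (rule Mc_mono[OF L that(2) u q _ su])
    fix s assume "a \<le> s" "s \<le> b"
    hence "0 \<le> s / L" using that L by auto
    hence "0 \<le> u * k0 (s / L)" using u k0_nonneg by auto
    thus "p - v \<le> p + u * k0 (s / L)" using v by linarith
  qed
  have B: "Mc p v L a \<le> Mc p v L b" if "a \<le> b" for a b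
  proof (rule Mc_mono[OF L that v q _ sv])
    fix s
    have "v * (-1) \<le> v * k0 (s / L)" using v k0_ge by (intro mult_left_mono) auto
    thus "p - v \<le> p + v * k0 (s / L)" by linarith
  qed
  show ?thesis
  proof (cases "0 \<le> x")
    case True thus ?thesis using A[OF True xy] MM_pos[of x] MM_pos[of y] xy by simp
  next
    case False
    show ?thesis
    proof (cases "y \<le> 0")
      case True thus ?thesis using B[OF xy] MM_neg[of x] MM_neg[of y] False by simp
    next
      case False2: False
      have "MM p u v L x = Mc p v L x" using False by (simp add: MM_neg)
      also have "\<dots> \<le> Mc p v L 0" using B[of x 0] False by simp
      also have "\<dots> = Mc p u L 0" by (simp add: Mc_def)
      also have "\<dots> \<le> Mc p u L y" using A[of 0 y] False2 by simp
      also have "\<dots> = MM p u v L y" using False2 by (simp add: MM_pos)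
      finally show ?thesis .
    qed
  qed
qed

lemma dPhi_MM: "t > 0 \<Longrightarrow> dPhi p u v L t = MM p u v L (ln t)"
proof -
  assume t: "t > 0"
  have "exp ((p - 1) * ln t + gg u v L (ln t)) * t = exp ((p - 1) * ln t + gg u v L (ln t)) * exp (ln t)"
    using t by simp
  also have "\<dots> = exp ((p - 1) * ln t + gg u v L (ln t) + ln t)" by (rule exp_add[symmetric])
  also have "(p - 1) * ln t + gg u v L (ln t) + ln t = p * ln t + gg u v L (ln t)" by (simp add: algebra_simps)
  finally have "exp (p * ln t + gg u v L (ln t)) = exp ((p - 1) * ln t + gg u v L (ln t)) * t" by simp
  thus ?thesis using t by (simp add: dPhi_def MM_def)
qed

lemma Phi_cont:
  assumes L: "L > 0" and u: "u \<ge> 0" and v: "v \<ge> 0" and p: "p \<ge> 1"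
  shows "continuous_on {0..} (Phi p u v L)"
proof -
  have "continuous (at x within {0..}) (Phi p u v L)" if x: "x \<ge> 0" for x
  proof (cases "x = 0")
    case False
    hence "x > 0" using x by auto
    from DERIV_isCont[OF Phi_deriv[OF L this]] show ?thesis by (rule continuous_at_imp_continuous_within)
  next
    case True
    let ?C = "exp (2 * L * (u + v))"
    have ev: "\<forall>\<^sub>F t in at 0 within {0..}. 0 \<le> Phi p u v L t \<and> Phi p u v L t \<le> ?C * t"
      unfolding eventually_at
    proof (intro exI[of _ 1] conjI ballI impI)
      fix t :: real assume "t \<in> {0..}" "t \<noteq> 0 \<and> dist t 0 < 1"
      hence t: "0 \<le> t" "t \<le> 1" by auto
      have "t powr p \<le> Phi p u v L t" "Phi p u v L t \<le> ?C * t powr p"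
        using Phi_bounds[OF L u v t(1)] by auto
      moreover have "t powr p \<le> t" using powr_le_self t p by auto
      moreover have "0 \<le> t powr p" by simp
      moreover have "?C * t powr p \<le> ?C * t" using \<open>t powr p \<le> t\<close> by (intro mult_left_mono) auto
      ultimately show "0 \<le> Phi p u v L t" "Phi p u v L t \<le> ?C * t"
        by linarith+
    qed simp
    have "((\<lambda>t. ?C * t) \<longlongrightarrow> ?C * 0) (at 0 within {0..})"
      by (intro tendsto_intros)
    hence h: "((\<lambda>t. ?C * t) \<longlongrightarrow> 0) (at 0 within {0..})" by simp
    have e1: "\<forall>\<^sub>F t in at 0 within {0..}. (\<lambda>_. 0) t \<le> Phi p u v L t"
      by (rule eventually_mono[OF ev]) simp
    have e2: "\<forall>\<^sub>F t in at 0 within {0..}. Phi p u v L t \<le> ?C * t"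
      by (rule eventually_mono[OF ev]) simp
    have "(Phi p u v L \<longlongrightarrow> 0) (at 0 within {0..})"
      by (rule tendsto_sandwich[OF e1 e2 tendsto_const h])
    thus ?thesis using True by (simp add: continuous_within Phi_def)
  qed
  thus ?thesis by (simp add: continuous_on_eq_continuous_within)
qed


locale params =
  fixes p u v L :: real
  assumes L: "L > 0" and u: "u \<ge> 0" and v: "v \<ge> 0" and q: "p - v > 1"
    and su: "4 * u \<le> L * ((p - v - 1) * (p - v))"
    and sv: "4 * v \<le> L * ((p - v - 1) * (p - v))"
begin

lemma p1: "p \<ge> 1" using q v by linarith

lemma young: "young_function (Phi p u v L)"
  unfolding young_function_def
proof (intro conjI allI impI)
  show "convex_on {0..} (Phi p u v L)"
  proof (rule convex_from_deriv[OF Phi_cont[OF L u v p1] Phi_deriv[OF L]])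
    fix x y :: real assume "0 < x" "x \<le> y"
    thus "dPhi p u v L x \<le> dPhi p u v L y"
      using MM_mono[OF L u v q su sv, of "ln x" "ln y"] by (simp add: dPhi_MM)
  qed
  show "Phi p u v L 0 = 0" by (simp add: Phi_def)
  show "0 < Phi p u v L t" if "0 < t" for t using that by (simp add: Phi_def)
  have "\<forall>\<^sub>F t in at_top. t \<le> Phi p u v L t"
    using eventually_ge_at_top[of "1::real"]
  proof (rule eventually_mono)
    fix t :: real assume t: "1 \<le> t"
    have "t \<le> t powr p" using powr_ge_self[OF t p1] .
    also have "\<dots> \<le> Phi p u v L t" using Phi_bounds(1)[OF L u v, of t] t by simp
    finally show "t \<le> Phi p u v L t" .
  qed
  thus "filterlim (Phi p u v L) at_top at_top"
    by (rule filterlim_at_top_mono[OF filterlim_ident])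
qed

lemma ratio: "t > 0 \<Longrightarrow> t * right_deriv (Phi p u v L) t / Phi p u v L t = p + hh u v L (ln t)"
  using right_deriv_eq[OF Phi_deriv[OF L]] by (simp add: dPhi_def Phi_def field_simps)

lemma hh_le: "hh u v L s \<le> u"
proof (cases "0 \<le> s")
  case True
  hence "u * k0 (s / L) \<le> u * 1" using u k0_le by (intro mult_left_mono) auto
  thus ?thesis using True by (simp add: hh_def)
next
  case False
  hence "k0 (s / L) \<le> 0" using L by (intro k0_nonpos) (simp add: divide_nonpos_pos)
  hence "v * k0 (s / L) \<le> 0" using v by (simp add: mult_nonneg_nonpos)
  thus ?thesis using False u by (simp add: hh_def)
qed

lemma hh_ge: "hh u v L s \<ge> - v"
proof (cases "0 \<le> s")
  case True
  hence "k0 (s / L) \<ge> 0" using L by (intro k0_nonneg) simp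
  hence "u * k0 (s / L) \<ge> 0" using u by simp
  thus ?thesis using True v by (simp add: hh_def)
next
  case False
  have "v * (-1) \<le> v * k0 (s / L)" using v k0_ge by (intro mult_left_mono) auto
  thus ?thesis using False by (simp add: hh_def)
qed

lemma hh_max: "hh u v L L = u" using L by (simp add: hh_def k0_1)
lemma hh_min: "hh u v L (-L) = - v" using L by (simp add: hh_def k0_neg k0_1)

lemma upper: "upper_exponent (Phi p u v L) = ereal (p + u)"
proof -
  have "upper_exponent (Phi p u v L) = (SUP t\<in>{0<..}. ereal (p + hh u v L (ln t)))"
    unfolding upper_exponent_def by (rule SUP_cong) (auto simp: ratio)
  also have "\<dots> = ereal (p + u)"
  proof (rule antisym)
    show "(SUP t\<in>{0<..}. ereal (p + hh u v L (ln t))) \<le> ereal (p + u)"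
      by (rule SUP_least) (simp add: hh_le)
    have "ereal (p + hh u v L (ln (exp L))) \<le> (SUP t\<in>{0<..}. ereal (p + hh u v L (ln t)))"
      by (rule SUP_upper) simp
    thus "ereal (p + u) \<le> (SUP t\<in>{0<..}. ereal (p + hh u v L (ln t)))" by (simp add: hh_max)
  qed
  finally show ?thesis .
qed

lemma lower: "lower_exponent (Phi p u v L) = ereal (p - v)"
proof -
  have "lower_exponent (Phi p u v L) = (INF t\<in>{0<..}. ereal (p + hh u v L (ln t)))"
    unfolding lower_exponent_def by (rule INF_cong) (auto simp: ratio)
  also have "\<dots> = ereal (p - v)"
  proof (rule antisym)
    show "ereal (p - v) \<le> (INF t\<in>{0<..}. ereal (p + hh u v L (ln t)))"
      proof (rule INF_greatest)
      fix t :: real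
      have "- v \<le> hh u v L (ln t)" by (rule hh_ge)
      thus "ereal (p - v) \<le> ereal (p + hh u v L (ln t))" by simp
    qed
    have "(INF t\<in>{0<..}. ereal (p + hh u v L (ln t))) \<le> ereal (p + hh u v L (ln (exp (-L))))"
      by (rule INF_lower) simp
    thus "(INF t\<in>{0<..}. ereal (p + hh u v L (ln t))) \<le> ereal (p - v)" by (simp add: hh_min)
  qed
  finally show ?thesis .
qed


lemma lp_imp_orlicz:
  fixes f :: "'a::euclidean_space \<Rightarrow> real"
  assumes meas: "f \<in> borel_measurable lebesgue"
    and fin: "(\<integral>\<^sup>+ x. ennreal (\<bar>f x\<bar> powr p) \<partial>lebesgue) < \<infinity>"
  shows "luxemburg_norm (Phi p u v L) f < \<infinity>"
proof -
  define C where "C = exp (2 * L * (u + v))"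
  have C: "C > 0" by (simp add: C_def)
  obtain r where r: "r \<ge> 0" "(\<integral>\<^sup>+ x. ennreal (\<bar>f x\<bar> powr p) \<partial>lebesgue) = ennreal r"
    using fin by (metis infinity_ennreal_def less_top_ennreal)
  define c where "c = (C * r + 1) powr (1 / p)"
  have "C * r \<ge> 0" using C r by simp
  hence pos: "C * r + 1 > 0" by linarith
  have cpos: "c > 0" using pos by (simp add: c_def)
  have cp: "c powr p = C * r + 1" using pos p1 by (simp add: c_def powr_powr)
  have pt: "ennreal (Phi p u v L \<bar>f x / c\<bar>) \<le> ennreal (C / c powr p * \<bar>f x\<bar> powr p)" for x
  proof -
    have "Phi p u v L \<bar>f x / c\<bar> \<le> C * \<bar>f x / c\<bar> powr p"
      using Phi_bounds(2)[OF L u v, of "\<bar>f x / c\<bar>" p] by (simp add: C_def)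
    also have "\<bar>f x / c\<bar> powr p = \<bar>f x\<bar> powr p / c powr p"
      using cpos by (simp add: powr_divide)
    finally show ?thesis by (intro ennreal_leI) simp
  qed
  have "orlicz_modular (Phi p u v L) (\<lambda>x. f x / c) \<le> (\<integral>\<^sup>+ x. ennreal (C / c powr p * \<bar>f x\<bar> powr p) \<partial>lebesgue)"
    unfolding orlicz_modular_def by (rule nn_integral_mono) (rule pt)
  also have "\<dots> = (\<integral>\<^sup>+ x. ennreal (C / c powr p) * ennreal (\<bar>f x\<bar> powr p) \<partial>lebesgue)"
    using C cpos by (intro nn_integral_cong) (simp add: ennreal_mult'[symmetric])
  also have "\<dots> = ennreal (C / c powr p) * (\<integral>\<^sup>+ x. ennreal (\<bar>f x\<bar> powr p) \<partial>lebesgue)"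
    by (rule nn_integral_cmult) (use meas in measurable)
  also have "\<dots> = ennreal (C / c powr p * r)" using r C cpos by (simp only: r(2) ennreal_mult'[symmetric] divide_nonneg_pos less_imp_le powr_gt_zero)
  also have "\<dots> \<le> 1"
  proof -
    have "C / c powr p * r = C * r / (C * r + 1)" using cp by simp
    also have "\<dots> \<le> 1" using pos by (simp add: divide_le_eq_1)
    finally show ?thesis by simp
  qed
  finally have "c \<in> {c. c > 0 \<and> orlicz_modular (Phi p u v L) (\<lambda>x. f x / c) \<le> 1}" using cpos by simp
  hence "luxemburg_norm (Phi p u v L) f \<le> ennreal c"
    unfolding luxemburg_norm_def by (rule INF_lower)
  also have "\<dots> < \<infinity>" by simp
  finally show ?thesis .
qed

lemma orlicz_imp_lp:
  fixes f :: "'a::euclidean_space \<Rightarrow> real"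
  assumes meas: "f \<in> borel_measurable lebesgue"
    and fin: "luxemburg_norm (Phi p u v L) f < \<infinity>"
  shows "(\<integral>\<^sup>+ x. ennreal (\<bar>f x\<bar> powr p) \<partial>lebesgue) < \<infinity>"
proof -
  have "{c. c > 0 \<and> orlicz_modular (Phi p u v L) (\<lambda>x. f x / c) \<le> 1} \<noteq> {}"
  proof
    assume "{c. c > 0 \<and> orlicz_modular (Phi p u v L) (\<lambda>x. f x / c) \<le> 1} = {}"
    hence "luxemburg_norm (Phi p u v L) f = \<infinity>" unfolding luxemburg_norm_def by simp
    thus False using fin by simp
  qed
  then obtain c where c: "c > 0" "orlicz_modular (Phi p u v L) (\<lambda>x. f x / c) \<le> 1" by auto
  have pt: "ennreal (\<bar>f x\<bar> powr p) = ennreal (c powr p) * ennreal ((\<bar>f x\<bar> / c) powr p)" for x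
  proof -
    have "\<bar>f x\<bar> powr p = c powr p * ((\<bar>f x\<bar> / c) powr p)"
      using c by (simp add: powr_divide)
    thus ?thesis by (simp add: ennreal_mult')
  qed
  have "(\<integral>\<^sup>+ x. ennreal (\<bar>f x\<bar> powr p) \<partial>lebesgue) = ennreal (c powr p) * (\<integral>\<^sup>+ x. ennreal ((\<bar>f x\<bar> / c) powr p) \<partial>lebesgue)"
    unfolding pt by (rule nn_integral_cmult) (use meas in measurable)
  also have "\<dots> \<le> ennreal (c powr p) * orlicz_modular (Phi p u v L) (\<lambda>x. f x / c)"
    unfolding orlicz_modular_def
  proof (intro mult_left_mono nn_integral_mono ennreal_leI)
    fix x
    show "(\<bar>f x\<bar> / c) powr p \<le> Phi p u v L \<bar>f x / c\<bar>"
      using Phi_bounds(1)[OF L u v, of "\<bar>f x / c\<bar>" p] c by simp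
  qed simp
  also have "\<dots> \<le> ennreal (c powr p) * 1" using c by (intro mult_left_mono) auto
  also have "\<dots> < \<infinity>" by simp
  finally show ?thesis .
qed

lemma orlicz_eq: "(orlicz_space (Phi p u v L) :: ('a::euclidean_space \<Rightarrow> real) set) = Lp_space p"
  unfolding orlicz_space_def Lp_space_def using lp_imp_orlicz orlicz_imp_lp by blast

end

theorem mainTheorem7:
  fixes p1 p p2 :: real
  assumes "1 < p1" and "p1 < p" and "p < p2"
  shows "\<exists>\<Phi>. young_function \<Phi> \<and>
           (orlicz_space \<Phi> :: ('a::euclidean_space \<Rightarrow> real) set) = Lp_space p \<and>
           lower_exponent \<Phi> = ereal p1 \<and> upper_exponent \<Phi> = ereal p2"
proof -
  define u where "u = p2 - p"
  define v where "v = p - p1"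
  define L where "L = 4 * (u + v) / ((p1 - 1) * p1) + 1"
  have k: "(p1 - 1) * p1 > 0" using assms by simp
  have uv: "u \<ge> 0" "v \<ge> 0" using assms by (auto simp: u_def v_def)
  have pv: "p - v = p1" by (simp add: v_def)
  have Lk: "L * ((p1 - 1) * p1) = 4 * (u + v) + (p1 - 1) * p1"
  proof -
    have "4 * (u + v) / ((p1 - 1) * p1) * ((p1 - 1) * p1) = 4 * (u + v)"
    proof -
      have g: "\<And>a K::real. K \<noteq> 0 \<Longrightarrow> a / K * K = a" by simp
      show ?thesis by (rule g) (use k in linarith)
    qed
    thus ?thesis by (simp add: L_def distrib_right)
  qed
  have Lpos: "L > 0" using k uv by (simp add: L_def add_nonneg_pos)
  interpret params p u v L
  proof
    show "L > 0" by (rule Lpos)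
    show "u \<ge> 0" "v \<ge> 0" by (rule uv)+
    show "p - v > 1" using pv assms by simp
    show "4 * u \<le> L * ((p - v - 1) * (p - v))" unfolding pv Lk using uv k by simp
    show "4 * v \<le> L * ((p - v - 1) * (p - v))" unfolding pv Lk using uv k by simp
  qed
  have "young_function (Phi p u v L) \<and>
           (orlicz_space (Phi p u v L) :: ('a::euclidean_space \<Rightarrow> real) set) = Lp_space p \<and>
           lower_exponent (Phi p u v L) = ereal p1 \<and> upper_exponent (Phi p u v L) = ereal p2"
    using young orlicz_eq lower upper pv by (simp add: u_def)
  thus ?thesis by blast
qed

end
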